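(* Let $N\ge 2$, $S\ge 1$, $d\ge 1$ be integers. If $d\ge N-1$, then for every next-token distribution $\pi$ on $[N]^S$ we have $d_{KL}(\pi,\mathcal{L}(N,S,d))=0$. Conversely, if $d<N-1$, there exists a next-token distribution $\pi$ on $[N]^S$ such that $d_{KL}(\pi,\mathcal{L}(N,S,d))>0$.
   Context: $[N]=\{1,\dots,N\}$. A next-token distribution $\pi$ consists of a prior probability distribution on $[N]^S$ together with, for each $t_{1:S}\in[N]^S$, a conditional probability distribution $\pi_{t_{1:S}}=\pi(\cdot\mid t_{1:S})$ on $[N]$. For $f:[N]^S\to\mathbb{R}^N$, $d_{KL}(\pi,f):=\mathbb{E}_{t_{1:S}\sim\pi}\big[\mathrm{KL}(\pi_{t_{1:S}}\,\|\,\mathrm{Softmax}(f(t_{1:S})))\big]$. The set of sequence encoders is $\mathcal{L}(N,S,d):=\{f_{W,E}: W\in\mathbb{R}^{N\times d},\ E:[N]^S\to\mathbb{R}^d\}$ with $f_{W,E}(t_{1:S})=W E(t_{1:S})$, and $d_{KL}(\pi,\mathcal{L}(N,S,d)):=\inf_{f\in\mathcal{L}(N,S,d)}d_{KL}(\pi,f)$. *)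

theory Defs
  imports Complex_Main
begin

definition seqs :: "nat \<Rightarrow> nat \<Rightarrow> nat list set" where
  "seqs N S = {t. length t = S \<and> set t \<subseteq> {1..N}}"

definition is_dist_on :: "nat \<Rightarrow> (nat \<Rightarrow> real) \<Rightarrow> bool" where
  "is_dist_on N P \<longleftrightarrow> (\<forall>i\<in>{1..N}. P i \<ge> 0) \<and> (\<Sum>i=1..N. P i) = 1"

text \<open>A next-token distribution: prior p on [N]^S and conditionals q t on [N].\<close>
definition next_token_dist ::
    "nat \<Rightarrow> nat \<Rightarrow> (nat list \<Rightarrow> real) \<Rightarrow> (nat list \<Rightarrow> nat \<Rightarrow> real) \<Rightarrow> bool" where
  "next_token_dist N S p q \<longleftrightarrow>
     (\<forall>t\<in>seqs N S. p t \<ge> 0) \<and> (\<Sum>t\<in>seqs N S. p t) = 1 \<and>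
     (\<forall>t\<in>seqs N S. is_dist_on N (q t))"

definition softmax :: "nat \<Rightarrow> (nat \<Rightarrow> real) \<Rightarrow> nat \<Rightarrow> real" where
  "softmax N v i = exp (v i) / (\<Sum>k=1..N. exp (v k))"

text \<open>KL divergence on [N], with the convention 0 log 0 = 0.\<close>
definition KL :: "nat \<Rightarrow> (nat \<Rightarrow> real) \<Rightarrow> (nat \<Rightarrow> real) \<Rightarrow> real" where
  "KL N P Q = (\<Sum>i\<in>{i\<in>{1..N}. P i \<noteq> 0}. P i * ln (P i / Q i))"

definition dKL ::
    "nat \<Rightarrow> nat \<Rightarrow> (nat list \<Rightarrow> real) \<Rightarrow> (nat list \<Rightarrow> nat \<Rightarrow> real)
      \<Rightarrow> (nat list \<Rightarrow> nat \<Rightarrow> real) \<Rightarrow> real" where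
  "dKL N S p q f = (\<Sum>t\<in>seqs N S. p t * KL N (q t) (softmax N (f t)))"

definition encoder ::
    "nat \<Rightarrow> (nat \<Rightarrow> nat \<Rightarrow> real) \<Rightarrow> (nat list \<Rightarrow> nat \<Rightarrow> real) \<Rightarrow> nat list \<Rightarrow> nat \<Rightarrow> real" where
  "encoder d W E t i = (\<Sum>j=1..d. W i j * E t j)"

definition encoders :: "nat \<Rightarrow> (nat list \<Rightarrow> nat \<Rightarrow> real) set" where
  "encoders d = {encoder d W E | W E. True}"

definition dKL_L ::
    "nat \<Rightarrow> nat \<Rightarrow> nat \<Rightarrow> (nat list \<Rightarrow> real) \<Rightarrow> (nat list \<Rightarrow> nat \<Rightarrow> real) \<Rightarrow> real" where
  "dKL_L N S d p q = (INF f\<in>encoders d. dKL N S p q f)"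

end

theory Submission
  imports Defs
begin

lemma kernel_exists:
  "finite I \<Longrightarrow> m < card I \<Longrightarrow>
    \<exists>x. (\<exists>i\<in>I. x i \<noteq> (0::real)) \<and> (\<forall>j<m. (\<Sum>i\<in>I. F j i * x i) = 0)"
proof (induction m arbitrary: I F)
  case 0
  then have "I \<noteq> {}" by auto
  then obtain i where "i \<in> I" by auto
  then show ?case by (intro exI[of _ "\<lambda>_. 1"]) auto
next
  case (Suc m)
  show ?case
  proof (cases "\<forall>i\<in>I. F m i = 0")
    case True
    from Suc.IH[of I F] Suc.prems obtain x where
      x: "\<exists>i\<in>I. x i \<noteq> 0" "\<forall>j<m. (\<Sum>i\<in>I. F j i * x i) = 0" by auto
    show ?thesis
      apply (rule exI[of _ x])
      using x True by (auto simp: less_Suc_eq)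
  next
    case False
    then obtain i0 where i0: "i0 \<in> I" "F m i0 \<noteq> 0" by auto
    define g where "g = F m i0"
    define I' where "I' = I - {i0}"
    define F' where "F' = (\<lambda>j i. F j i - F j i0 * F m i / g)"
    have cI': "m < card I'" using Suc.prems i0 by (auto simp: I'_def)
    have fI': "finite I'" using Suc.prems by (auto simp: I'_def)
    from Suc.IH[OF fI' cI', of F'] obtain x' where
      x': "\<exists>i\<in>I'. x' i \<noteq> 0" "\<forall>j<m. (\<Sum>i\<in>I'. F' j i * x' i) = 0" by auto
    define x where "x = x'(i0 := - (\<Sum>i\<in>I'. F m i * x' i) / g)"
    have split: "(\<Sum>i\<in>I. h i * x i) = h i0 * x i0 + (\<Sum>i\<in>I'. h i * x' i)" for h
    proof -
      have "(\<Sum>i\<in>I. h i * x i) = h i0 * x i0 + (\<Sum>i\<in>I'. h i * x i)"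
        unfolding I'_def using Suc.prems(1) i0(1) by (simp add: sum.remove)
      also have "(\<Sum>i\<in>I'. h i * x i) = (\<Sum>i\<in>I'. h i * x' i)"
        by (rule sum.cong) (auto simp: x_def I'_def)
      finally show ?thesis .
    qed
    have gnz: "g \<noteq> 0" using i0 by (simp add: g_def)
    have xi0: "x i0 = - (\<Sum>i\<in>I'. F m i * x' i) / g" by (simp add: x_def)
    have "\<forall>j<Suc m. (\<Sum>i\<in>I. F j i * x i) = 0"
    proof (intro allI impI)
      fix j assume "j < Suc m"
      show "(\<Sum>i\<in>I. F j i * x i) = 0"
      proof (cases "j = m")
        case True
        then show ?thesis unfolding split xi0 using gnz by (simp add: g_def)
      next
        case False
        with \<open>j < Suc m\<close> have "j < m" by auto
        have "(\<Sum>i\<in>I'. F' j i * x' i) = (\<Sum>i\<in>I'. F j i * x' i) - F j i0 / g * (\<Sum>i\<in>I'. F m i * x' i)"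
          by (simp add: F'_def algebra_simps sum_subtractf sum_distrib_left sum_divide_distrib)
        with x'(2) \<open>j < m\<close> have "(\<Sum>i\<in>I'. F j i * x' i) = F j i0 / g * (\<Sum>i\<in>I'. F m i * x' i)" by auto
        then show ?thesis unfolding split xi0 using gnz by (simp add: field_simps)
      qed
    qed
    moreover have "\<exists>i\<in>I. x i \<noteq> 0" using x' by (auto simp: x_def I'_def)
    ultimately show ?thesis by blast
  qed
qed

lemma pw1:
  fixes P Q :: real assumes "P > 0" "Q > 0"
  shows "P * ln (P / Q) \<ge> P - Q"
proof -
  have "ln (Q / P) \<le> Q / P - 1" using assms by (intro ln_le_minus_one) auto
  then have "ln (P / Q) \<ge> 1 - Q / P" using assms by (simp add: ln_div)
  then have "P * ln (P / Q) \<ge> P * (1 - Q / P)" using assms by (intro mult_left_mono) auto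
  moreover have "P * (1 - Q/P) = P - Q" using assms by (simp add: right_diff_distrib)
  ultimately show ?thesis by linarith
qed

lemma pw2:
  fixes P Q :: real assumes "P > 0" "Q > 0" "\<bar>ln (P / Q)\<bar> \<ge> 2"
  shows "P * ln (P / Q) \<ge> P - Q + P"
proof -
  define y where "y = ln (P / Q)"
  have Qe: "Q = P * exp (- y)" using assms by (simp add: y_def exp_minus field_simps)
  have key: "y + exp (- y) - 1 \<ge> 1"
  proof (cases "y \<ge> 2")
    case True then show ?thesis using exp_gt_zero[of "-y"] by linarith
  next
    case False
    then have "- y \<ge> 2" using assms(3) by (auto simp: y_def)
    then have "1 + (-y) + (-y)^2/2 \<le> exp (-y)" by (intro exp_lower_Taylor_quadratic) auto
    moreover have "(-y)^2 \<ge> 2^2" using \<open>- y \<ge> 2\<close> by (intro power_mono) auto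
    then have "(-y)^2 \<ge> 4" by simp
    ultimately show ?thesis by linarith
  qed
  have "P * (y + exp (- y) - 1) \<ge> P * 1" using assms(1) key by (intro mult_left_mono) auto
  moreover have "P * (y + exp (- y) - 1) = P * y + P * exp (- y) - P" by (simp add: algebra_simps)
  moreover have "P * ln (P / Q) = P * y" by (simp add: y_def)
  ultimately show ?thesis using Qe by linarith
qed


lemma seqs_finite: "finite (seqs N S)"
proof -
  have "seqs N S \<subseteq> {xs. set xs \<subseteq> {1..N} \<and> length xs = S}" by (auto simp: seqs_def)
  moreover have "finite {xs. set xs \<subseteq> {1..N} \<and> length xs = S}" by (rule finite_lists_length_eq) auto
  ultimately show ?thesis by (rule finite_subset)
qed

lemma softmax_denom_pos: "N \<ge> 1 \<Longrightarrow> (\<Sum>k=1..N. exp ((v::nat\<Rightarrow>real) k)) > 0"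
  by (rule ordered_comm_monoid_add_class.sum_pos) auto

lemma softmax_pos: "N \<ge> 1 \<Longrightarrow> softmax N v i > 0"
  unfolding softmax_def using softmax_denom_pos[of N v] by simp

lemma softmax_sum: "N \<ge> 1 \<Longrightarrow> (\<Sum>i=1..N. softmax N v i) = 1"
  unfolding softmax_def using softmax_denom_pos[of N v] by (simp add: sum_divide_distrib[symmetric])

lemma KL_nonneg:
  assumes "is_dist_on N P" "\<forall>i\<in>{1..N}. Q i > 0" "(\<Sum>i=1..N. Q i) = 1"
  shows "KL N P Q \<ge> 0"
proof -
  define A where "A = {i\<in>{1..N}. P i \<noteq> 0}"
  have Apos: "i \<in> A \<Longrightarrow> P i > 0 \<and> Q i > 0" for i
    using assms(1,2) unfolding A_def is_dist_on_def by force
  have "KL N P Q = (\<Sum>i\<in>A. P i * ln (P i / Q i))" by (simp add: KL_def A_def)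
  also have "\<dots> \<ge> (\<Sum>i\<in>A. P i - Q i)"
    by (intro sum_mono pw1) (auto dest: Apos)
  finally have 1: "KL N P Q \<ge> (\<Sum>i\<in>A. P i) - (\<Sum>i\<in>A. Q i)" by (simp add: sum_subtractf)
  have "(\<Sum>i\<in>A. P i) = (\<Sum>i=1..N. P i)"
    by (rule sum.mono_neutral_left) (auto simp: A_def)
  then have 2: "(\<Sum>i\<in>A. P i) = 1" using assms(1) by (simp add: is_dist_on_def)
  have "(\<Sum>i\<in>A. Q i) \<le> (\<Sum>i=1..N. Q i)"
    by (rule sum_mono2) (use assms(2) in \<open>auto simp: A_def less_imp_le\<close>)
  then show ?thesis using 1 2 assms(3) by linarith
qed

lemma part1:
  assumes N1: "N \<ge> 1" and dN: "d \<ge> N - 1" and nt: "next_token_dist N S p q"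
  shows "dKL_L N S d p q = 0"
proof -
  have pnn: "\<forall>t\<in>seqs N S. p t \<ge> 0" and psum: "(\<Sum>t\<in>seqs N S. p t) = 1"
    and qd: "\<forall>t\<in>seqs N S. is_dist_on N (q t)" using nt by (auto simp: next_token_dist_def)
  have lower: "dKL N S p q f \<ge> 0" for f
    unfolding dKL_def
    by (intro sum_nonneg mult_nonneg_nonneg KL_nonneg)
       (use pnn qd softmax_pos[OF N1] softmax_sum[OF N1] in auto)
  have upper: "\<exists>f\<in>encoders d. dKL N S p q f \<le> real N * \<eta>" if eta: "\<eta> > 0" for \<eta>
  proof -
    define W :: "nat \<Rightarrow> nat \<Rightarrow> real" where "W = (\<lambda>i j. if j = i - 1 then 1 else 0)"
    define E where "E = (\<lambda>t j. ln (q t (j + 1) + \<eta>) - ln (q t 1 + \<eta>))"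
    define f where "f = encoder d W E"
    have fin: "f \<in> encoders d" by (auto simp: encoders_def f_def)
    have fval: "f t i = ln (q t i + \<eta>) - ln (q t 1 + \<eta>)" if "i \<in> {1..N}" for t i
    proof (cases "i = 1")
      case True
      then show ?thesis by (simp add: f_def encoder_def W_def)
    next
      case False
      then have "i - 1 \<in> {1..d}" using that dN by auto
      have "f t i = (\<Sum>j=1..d. if j = i - 1 then E t j else 0)"
        unfolding f_def encoder_def W_def by (rule sum.cong) auto
      also have "\<dots> = E t (i - 1)" using \<open>i - 1 \<in> {1..d}\<close> by (simp add: sum.delta')
      finally have "f t i = E t (i - 1)" .
      then show ?thesis using False that by (simp add: E_def)
    qed
    have KLb: "KL N (q t) (softmax N (f t)) \<le> real N * \<eta>" if t: "t \<in> seqs N S" for t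
    proof -
      have qt: "is_dist_on N (q t)" using qd t by auto
      have qnn: "i \<in> {1..N} \<Longrightarrow> q t i \<ge> 0" for i using qt by (auto simp: is_dist_on_def)
      have q1: "q t 1 \<ge> 0" using qnn N1 by auto
      have ex: "exp (f t i) = (q t i + \<eta>) / (q t 1 + \<eta>)" if "i \<in> {1..N}" for i
        using fval[OF that, of t] qnn[OF that] q1 eta by (simp add: exp_diff)
      have den: "(\<Sum>k=1..N. exp (f t k)) = (1 + real N * \<eta>) / (q t 1 + \<eta>)"
      proof -
        have "(\<Sum>k=1..N. exp (f t k)) = (\<Sum>k=1..N. (q t k + \<eta>) / (q t 1 + \<eta>))"
          by (rule sum.cong) (auto simp: ex)
        also have "\<dots> = (\<Sum>k=1..N. q t k + \<eta>) / (q t 1 + \<eta>)" by (simp add: sum_divide_distrib)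
        also have "(\<Sum>k=1..N. q t k + \<eta>) = 1 + real N * \<eta>"
          using qt by (simp add: sum.distrib is_dist_on_def)
        finally show ?thesis .
      qed
      have sm: "softmax N (f t) i = (q t i + \<eta>) / (1 + real N * \<eta>)" if "i \<in> {1..N}" for i
      proof -
        have "q t 1 + \<eta> \<noteq> 0" using q1 eta by simp
        then show ?thesis unfolding softmax_def ex[OF that] den by simp
      qed
      define A where "A = {i\<in>{1..N}. q t i \<noteq> 0}"
      have "KL N (q t) (softmax N (f t)) = (\<Sum>i\<in>A. q t i * ln (q t i / softmax N (f t) i))"
        by (simp add: KL_def A_def)
      also have "\<dots> \<le> (\<Sum>i\<in>A. q t i * ln (1 + real N * \<eta>))"
      proof (rule sum_mono)
        fix i assume iA: "i \<in> A"
        then have i: "i \<in> {1..N}" and qp: "q t i > 0" using qnn by (auto simp: A_def less_le)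
        have pos: "1 + real N * \<eta> > 0" using eta by (simp add: add_pos_nonneg)
        have "q t i / softmax N (f t) i = q t i * (1 + real N * \<eta>) / (q t i + \<eta>)"
          using sm[OF i] qp eta by simp
        also have "\<dots> \<le> 1 + real N * \<eta>"
          using qp eta pos by (simp add: divide_le_eq mult_left_mono)
        finally have "ln (q t i / softmax N (f t) i) \<le> ln (1 + real N * \<eta>)"
          using qp softmax_pos[OF N1] pos by (intro ln_le_cancel_iff[THEN iffD2]) auto
        then show "q t i * ln (q t i / softmax N (f t) i) \<le> q t i * ln (1 + real N * \<eta>)"
          using qp by (intro mult_left_mono) auto
      qed
      also have "\<dots> = (\<Sum>i\<in>A. q t i) * ln (1 + real N * \<eta>)" by (simp add: sum_distrib_right)
      also have "(\<Sum>i\<in>A. q t i) = (\<Sum>i=1..N. q t i)"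
        by (rule sum.mono_neutral_left) (auto simp: A_def)
      also have "\<dots> = 1" using qt by (simp add: is_dist_on_def)
      also have "ln (1 + real N * \<eta>) \<le> real N * \<eta>" using eta by (intro ln_add_one_self_le_self) auto
      finally show ?thesis by simp
    qed
    have "dKL N S p q f \<le> (\<Sum>t\<in>seqs N S. p t * (real N * \<eta>))"
      unfolding dKL_def using pnn KLb by (intro sum_mono mult_left_mono) auto
    also have "\<dots> = real N * \<eta>" using psum by (simp add: sum_distrib_right[symmetric])
    finally show ?thesis using fin by blast
  qed
  have ne: "encoders d \<noteq> {}" by (auto simp: encoders_def)
  have bdd: "bdd_below ((\<lambda>f. dKL N S p q f) ` encoders d)"
    using lower by (intro bdd_belowI[of _ 0]) auto
  have ge: "dKL_L N S d p q \<ge> 0" unfolding dKL_L_def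
    using ne lower by (intro cINF_greatest) auto
  have le: "dKL_L N S d p q \<le> 0"
  proof (rule ccontr)
    assume "\<not> ?thesis"
    then have pos: "dKL_L N S d p q > 0" by simp
    define \<eta> where "\<eta> = dKL_L N S d p q / (2 * real N)"
    have "\<eta> > 0" using pos N1 by (simp add: \<eta>_def)
    from upper[OF this] obtain f where f: "f \<in> encoders d" "dKL N S p q f \<le> real N * \<eta>" by blast
    have "real N * \<eta> = dKL_L N S d p q / 2" using N1 by (simp add: \<eta>_def)
    moreover have "dKL_L N S d p q \<le> dKL N S p q f" unfolding dKL_L_def
      using bdd f(1) by (rule cINF_lower)
    ultimately show False using f(2) pos by linarith
  qed
  show ?thesis using ge le by simp
qed


lemma sum_if_one:
  assumes "h \<in> {1..N}"
  shows "(\<Sum>i=1..N. (if i = h then B else 1::real)) = B + real N - 1"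
proof -
  have "(\<Sum>i=1..N. (if i = h then B else 1::real)) = B + (\<Sum>i\<in>{1..N} - {h}. (if i = h then B else 1))"
    using assms by (simp add: sum.remove)
  also have "(\<Sum>i\<in>{1..N} - {h}. (if i = h then B else 1::real)) = (\<Sum>i\<in>{1..N} - {h}. 1)"
    by (rule sum.cong) auto
  also have "\<dots> = real N - 1" using assms by (simp add: of_nat_diff)
  finally show ?thesis by simp
qed

lemma part2:
  assumes N2: "N \<ge> 2" and S1: "S \<ge> 1" and dN: "d < N - 1"
  shows "\<exists>p q. next_token_dist N S p q \<and> dKL_L N S d p q > 0"
proof -
  have N1: "N \<ge> 1" using N2 by simp
  define c :: real where "c = 2 * real N"
  define B where "B = exp c"
  define Z where "Z = B + real N - 1"
  have B1: "B \<ge> 1" unfolding B_def c_def by simp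
  have Zpos: "Z > 0" unfolding Z_def using B1 N1 by simp
  define q where "q = (\<lambda>(t::nat list) i. (if i = hd t then B else 1) / Z)"
  define K where "K = card (seqs N S)"
  define p where "p = (\<lambda>t::nat list. 1 / real K)"
  have rep: "replicate S k \<in> seqs N S" if "k \<in> {1..N}" for k
    using that by (auto simp: seqs_def)
  have hdrep: "hd (replicate S k) = k" for k using S1 by (cases S) auto
  have Kpos: "K > 0" unfolding K_def using rep[of 1] N1 seqs_finite[of N S]
    by (auto simp: card_gt_0_iff)
  have hdt: "hd t \<in> {1..N}" if "t \<in> seqs N S" for t
  proof -
    have "t \<noteq> []" using that S1 by (auto simp: seqs_def)
    then have "hd t \<in> set t" by simp
    then show ?thesis using that by (auto simp: seqs_def)
  qed
  have qpos: "q t i > 0" for t i using Zpos B1 by (simp add: q_def)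
  have qdist: "is_dist_on N (q t)" if "t \<in> seqs N S" for t
  proof -
    have "(\<Sum>i=1..N. q t i) = (\<Sum>i=1..N. (if i = hd t then B else 1)) / Z"
      by (simp add: q_def sum_divide_distrib)
    also have "\<dots> = 1" using sum_if_one[OF hdt[OF that], of B] Zpos by (simp add: Z_def)
    finally show ?thesis using qpos by (auto simp: is_dist_on_def less_imp_le)
  qed
  have nt: "next_token_dist N S p q"
    unfolding next_token_dist_def using qdist Kpos by (auto simp: p_def K_def)
  define L where "L = 1 / (real K * Z)"
  have Lpos: "L > 0" using Kpos Zpos by (simp add: L_def)
  have bound: "dKL N S p q f \<ge> L" if fE: "f \<in> encoders d" for f
  proof -
    obtain W E where fWE: "f = encoder d W E" using fE by (auto simp: encoders_def)
    define F where "F = (\<lambda>j i. if j < d then W i (j + 1) else (1::real))"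
    have "\<exists>x. (\<exists>i\<in>{1..N}. x i \<noteq> (0::real)) \<and> (\<forall>j<d+1. (\<Sum>i\<in>{1..N}. F j i * x i) = 0)"
      by (rule kernel_exists) (use dN in auto)
    then obtain a where anz: "\<exists>i\<in>{1..N}. a i \<noteq> 0"
      and aF: "\<forall>j<d+1. (\<Sum>i\<in>{1..N}. F j i * a i) = 0" by blast
    have aW: "(\<Sum>i=1..N. a i * W i j) = 0" if "j \<in> {1..d}" for j
    proof -
      have "j - 1 < d + 1" "j - 1 < d" "j - 1 + 1 = j" using that by auto
      then show ?thesis using aF[rule_format, of "j - 1"] by (simp add: F_def mult.commute)
    qed
    have asum: "(\<Sum>i=1..N. a i) = 0" using aF[rule_format, of d] by (simp add: F_def)
    define M where "M = Max ((\<lambda>i. \<bar>a i\<bar>) ` {1..N})"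
    have Mge: "\<bar>a i\<bar> \<le> M" if "i \<in> {1..N}" for i
      unfolding M_def using that by (intro Max_ge) auto
    have "M \<in> (\<lambda>i. \<bar>a i\<bar>) ` {1..N}" unfolding M_def using N1 by (intro Max_in) auto
    then obtain k0 where k0: "k0 \<in> {1..N}" "\<bar>a k0\<bar> = M" by auto
    have Mpos: "M > 0" using anz Mge by force
    define t0 where "t0 = replicate S k0"
    have t0s: "t0 \<in> seqs N S" using rep[OF k0(1)] by (simp add: t0_def)
    have hdt0: "hd t0 = k0" by (simp add: t0_def hdrep)
    define v where "v = f t0"
    define D where "D = (\<Sum>k=1..N. exp (v k))"
    have Dpos: "D > 0" unfolding D_def using softmax_denom_pos[OF N1] .
    define Q where "Q = softmax N v"
    have Qpos: "Q i > 0" for i unfolding Q_def using softmax_pos[OF N1] .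
    have Qsum: "(\<Sum>i=1..N. Q i) = 1" unfolding Q_def using softmax_sum[OF N1] .
    have av: "(\<Sum>i=1..N. a i * v i) = 0"
    proof -
      have "(\<Sum>i=1..N. a i * v i) = (\<Sum>i=1..N. \<Sum>j=1..d. a i * W i j * E t0 j)"
        by (simp add: v_def fWE encoder_def sum_distrib_left mult.assoc)
      also have "\<dots> = (\<Sum>j=1..d. \<Sum>i=1..N. a i * W i j * E t0 j)" by (rule sum.swap)
      also have "\<dots> = (\<Sum>j=1..d. (\<Sum>i=1..N. a i * W i j) * E t0 j)"
        by (simp add: sum_distrib_right)
      also have "\<dots> = 0" using aW by simp
      finally show ?thesis .
    qed
    define \<delta> where "\<delta> = (\<lambda>i. ln (q t0 i / Q i))"
    have \<delta>eq: "\<delta> i = (if i = k0 then c else 0) + (ln D - ln Z) - v i" for i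
    proof -
      have "ln (q t0 i) = (if i = k0 then c else 0) - ln Z"
        using Zpos by (simp add: q_def hdt0 B_def ln_div)
      moreover have "ln (Q i) = v i - ln D"
        unfolding Q_def softmax_def D_def[symmetric] using Dpos by (simp add: ln_div)
      ultimately show ?thesis using qpos[of t0 i] Qpos[of i] by (simp add: \<delta>_def ln_div)
    qed
    have a\<delta>: "(\<Sum>i=1..N. a i * \<delta> i) = c * a k0"
    proof -
      have "(\<Sum>i=1..N. a i * \<delta> i) = (\<Sum>i=1..N. (if i = k0 then c * a k0 else 0))
           + (ln D - ln Z) * (\<Sum>i=1..N. a i) - (\<Sum>i=1..N. a i * v i)"
      proof -
        have pt: "a i * \<delta> i = ((if i = k0 then c * a k0 else 0) + (ln D - ln Z) * a i) - a i * v i" for i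
          by (simp add: \<delta>eq algebra_simps)
        show ?thesis unfolding pt sum_subtractf sum.distrib sum_distrib_left by simp
      qed
      also have "\<dots> = c * a k0" using k0(1) asum av by simp
      finally show ?thesis .
    qed
    have "c * M = \<bar>\<Sum>i=1..N. a i * \<delta> i\<bar>" using a\<delta> k0(2) by (simp add: abs_mult c_def)
    also have "\<dots> \<le> (\<Sum>i=1..N. \<bar>a i\<bar> * \<bar>\<delta> i\<bar>)"
      by (rule order_trans[OF sum_abs]) (simp add: abs_mult)
    also have "\<dots> \<le> (\<Sum>i=1..N. M * \<bar>\<delta> i\<bar>)"
      by (intro sum_mono mult_right_mono) (auto simp: Mge)
    also have "\<dots> = M * (\<Sum>i=1..N. \<bar>\<delta> i\<bar>)" by (simp add: sum_distrib_left)
    finally have "c * M \<le> M * (\<Sum>i=1..N. \<bar>\<delta> i\<bar>)" .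
    then have sdel: "(\<Sum>i=1..N. \<bar>\<delta> i\<bar>) \<ge> 2 * real N" using Mpos by (simp add: c_def mult.commute)
    have "\<exists>i\<in>{1..N}. \<bar>\<delta> i\<bar> \<ge> 2"
    proof (rule ccontr)
      assume "\<not> ?thesis"
      then have "\<forall>i\<in>{1..N}. \<bar>\<delta> i\<bar> < 2" by auto
      then have "(\<Sum>i=1..N. \<bar>\<delta> i\<bar>) < (\<Sum>i=1..N. 2)"
        using N1 by (intro sum_strict_mono) auto
      then show False using sdel by simp
    qed
    then obtain iS where iS: "iS \<in> {1..N}" "\<bar>\<delta> iS\<bar> \<ge> 2" by blast
    have "KL N (q t0) Q = (\<Sum>i=1..N. q t0 i * ln (q t0 i / Q i))"
      unfolding KL_def using qpos[of t0] by (intro sum.cong) (auto simp: less_imp_neq[symmetric])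
    also have "\<dots> \<ge> (\<Sum>i=1..N. (q t0 i - Q i) + (if i = iS then q t0 iS else 0))"
    proof (rule sum_mono)
      fix i assume "i \<in> {1..N}"
      show "(q t0 i - Q i) + (if i = iS then q t0 iS else 0) \<le> q t0 i * ln (q t0 i / Q i)"
        using pw1[OF qpos[of t0 i] Qpos[of i]] pw2[OF qpos[of t0 i] Qpos[of i]] iS(2)
        by (auto simp: \<delta>_def)
    qed
    finally have "KL N (q t0) Q \<ge> (\<Sum>i=1..N. q t0 i) - (\<Sum>i=1..N. Q i) + q t0 iS"
      using iS(1) by (simp add: sum.distrib sum_subtractf)
    moreover have "(\<Sum>i=1..N. q t0 i) = 1" using qdist[OF t0s] by (simp add: is_dist_on_def)
    moreover have "q t0 iS \<ge> 1 / Z" using B1 Zpos by (simp add: q_def divide_right_mono)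
    ultimately have KLb: "KL N (q t0) Q \<ge> 1 / Z" using Qsum by linarith
    have "dKL N S p q f \<ge> p t0 * KL N (q t0) (softmax N (f t0))"
      unfolding dKL_def
    proof (rule member_le_sum[OF t0s _ seqs_finite])
      fix t assume "t \<in> seqs N S - {t0}"
      then have ts: "t \<in> seqs N S" by simp
      have ss: "(\<Sum>i=1..N. softmax N (f t) i) = 1" by (rule softmax_sum[OF N1])
      show "0 \<le> p t * KL N (q t) (softmax N (f t))"
        by (intro mult_nonneg_nonneg KL_nonneg qdist[OF ts])
           (use ss in \<open>simp_all add: p_def softmax_pos[OF N1]\<close>)
    qed
    moreover have "p t0 * KL N (q t0) (softmax N (f t0)) \<ge> (1 / real K) * (1 / Z)"
    proof -
      have "1 / Z \<le> KL N (q t0) (softmax N (f t0))" using KLb by (simp add: Q_def v_def)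
      then have "(1 / real K) * (1 / Z) \<le> (1 / real K) * KL N (q t0) (softmax N (f t0))"
        using Kpos by (intro mult_left_mono) auto
      then show ?thesis by (simp add: p_def)
    qed
    ultimately show ?thesis by (simp add: L_def mult.commute)
  qed
  have ne: "encoders d \<noteq> {}" by (auto simp: encoders_def)
  have "dKL_L N S d p q \<ge> L" unfolding dKL_L_def
    using ne bound by (intro cINF_greatest) auto
  then show ?thesis using nt Lpos by (intro exI[of _ p] exI[of _ q]) auto
qed


theorem proposition2:
  fixes N S d :: nat
  assumes "N \<ge> 2" and "S \<ge> 1" and "d \<ge> 1"
  shows "(d \<ge> N - 1 \<longrightarrow>
            (\<forall>p q. next_token_dist N S p q \<longrightarrow> dKL_L N S d p q = 0))
       \<and> (d < N - 1 \<longrightarrow>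
            (\<exists>p q. next_token_dist N S p q \<and> dKL_L N S d p q > 0))"
  using part1[of N d S] part2[OF assms(1,2), of d] assms(1) by auto

end
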